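(* Let $L$ be a totally ordered normal incline and let $A$ be an $n\times n$ completely positive matrix over $L$. Then $\mathrm{CP\text{-}rank}(A)\le n$ for $n=2,3$.
   Context: An incline is a nonempty set $L$ with binary operations $\oplus,\otimes$ such that $(L,\oplus)$ is a semilattice ($\oplus$ associative, commutative, idempotent), $(L,\otimes)$ is a semigroup, $x\otimes(y\oplus z)=(x\otimes y)\oplus(x\otimes z)$ and $x\oplus(x\otimes y)=x$ for all $x,y,z$. The order is $x\le y\iff x\oplus y=y$; $L$ is totally ordered if this order is total, and commutative if $\otimes$ is commutative. An r-ideal is a nonempty $J\subseteq L$ closed under $\oplus$ and under multiplication by arbitrary elements of $L$; a lattice ideal is a nonempty $J\subseteq L$ closed under $\oplus$ and downward closed. A commutative incline $L$ is normal if it has an additive identity $\mathbf{0}$ and a multiplicative identity $\mathbf{1}$ and: every singly generated r-ideal is a lattice ideal (LI-property); for each $x\in L$ there is a unique $c$ with $c\otimes c=x$ (unique square root property); $x\otimes y\le(x\otimes x)\oplus(y\otimes y)$ for all $x,y$ (AG-property). Matrix product: $(BC)_{ij}=\bigoplus_k b_{ik}\otimes c_{kj}$; $B^T$ is the transpose. $A$ is completely positive if $A=BB^T$ for some $n\times k$ matrix $B$ over $L$ all of whose entries are of the form $c\otimes c$. The CP-rank of a completely positive $A$ is the smallest $k$ such that $A=BB^T$ with $B$ an $n\times k$ matrix over $L$. *)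

theory Defs
  imports Main
begin

definition incline :: "('a \<Rightarrow> 'a \<Rightarrow> 'a) \<Rightarrow> ('a \<Rightarrow> 'a \<Rightarrow> 'a) \<Rightarrow> bool" where
  "incline add mul \<longleftrightarrow>
     (\<forall>x y z. add (add x y) z = add x (add y z)) \<and>
     (\<forall>x y. add x y = add y x) \<and>
     (\<forall>x. add x x = x) \<and>
     (\<forall>x y z. mul (mul x y) z = mul x (mul y z)) \<and>
     (\<forall>x y z. mul x (add y z) = add (mul x y) (mul x z)) \<and>
     (\<forall>x y. add x (mul x y) = x)"

definition incline_le :: "('a \<Rightarrow> 'a \<Rightarrow> 'a) \<Rightarrow> 'a \<Rightarrow> 'a \<Rightarrow> bool" where
  "incline_le add x y \<longleftrightarrow> add x y = y"

definition totally_ordered :: "('a \<Rightarrow> 'a \<Rightarrow> 'a) \<Rightarrow> bool" where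
  "totally_ordered add \<longleftrightarrow> (\<forall>x y. incline_le add x y \<or> incline_le add y x)"

definition r_ideal :: "('a \<Rightarrow> 'a \<Rightarrow> 'a) \<Rightarrow> ('a \<Rightarrow> 'a \<Rightarrow> 'a) \<Rightarrow> 'a set \<Rightarrow> bool" where
  "r_ideal add mul J \<longleftrightarrow> J \<noteq> {} \<and> (\<forall>x\<in>J. \<forall>y\<in>J. add x y \<in> J) \<and>
     (\<forall>x\<in>J. \<forall>y. mul x y \<in> J \<and> mul y x \<in> J)"

definition lattice_ideal :: "('a \<Rightarrow> 'a \<Rightarrow> 'a) \<Rightarrow> 'a set \<Rightarrow> bool" where
  "lattice_ideal add J \<longleftrightarrow> J \<noteq> {} \<and> (\<forall>x\<in>J. \<forall>y\<in>J. add x y \<in> J) \<and>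
     (\<forall>x\<in>J. \<forall>y. incline_le add y x \<longrightarrow> y \<in> J)"

definition gen_r_ideal :: "('a \<Rightarrow> 'a \<Rightarrow> 'a) \<Rightarrow> ('a \<Rightarrow> 'a \<Rightarrow> 'a) \<Rightarrow> 'a \<Rightarrow> 'a set" where
  "gen_r_ideal add mul x = \<Inter>{J. r_ideal add mul J \<and> x \<in> J}"

definition normal_incline :: "('a \<Rightarrow> 'a \<Rightarrow> 'a) \<Rightarrow> ('a \<Rightarrow> 'a \<Rightarrow> 'a) \<Rightarrow> bool" where
  "normal_incline add mul \<longleftrightarrow>
     incline add mul \<and> (\<forall>x y. mul x y = mul y x) \<and>
     (\<exists>z. \<forall>x. add z x = x) \<and> (\<exists>e. \<forall>x. mul e x = x) \<and>
     (\<forall>x. lattice_ideal add (gen_r_ideal add mul x)) \<and>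
     (\<forall>x. \<exists>!c. mul c c = x) \<and>
     (\<forall>x y. incline_le add (mul x y) (add (mul x x) (mul y y)))"

definition izero :: "('a \<Rightarrow> 'a \<Rightarrow> 'a) \<Rightarrow> 'a" where
  "izero add = (THE z. \<forall>x. add z x = x)"

definition isum :: "('a \<Rightarrow> 'a \<Rightarrow> 'a) \<Rightarrow> (nat \<Rightarrow> 'a) \<Rightarrow> nat \<Rightarrow> 'a" where
  "isum add f k = foldr (\<lambda>l acc. add (f l) acc) [0..<k] (izero add)"

(* Matrices are functions nat \<Rightarrow> nat \<Rightarrow> 'a; only indices below the size matter.
   A = B B^T for A n\<times>n and B n\<times>k. *)
definition is_BBT :: "('a \<Rightarrow> 'a \<Rightarrow> 'a) \<Rightarrow> ('a \<Rightarrow> 'a \<Rightarrow> 'a) \<Rightarrow> nat \<Rightarrow> nat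
     \<Rightarrow> (nat \<Rightarrow> nat \<Rightarrow> 'a) \<Rightarrow> (nat \<Rightarrow> nat \<Rightarrow> 'a) \<Rightarrow> bool" where
  "is_BBT add mul n k B A \<longleftrightarrow>
     (\<forall>i<n. \<forall>j<n. A i j = isum add (\<lambda>l. mul (B i l) (B j l)) k)"

definition completely_positive :: "('a \<Rightarrow> 'a \<Rightarrow> 'a) \<Rightarrow> ('a \<Rightarrow> 'a \<Rightarrow> 'a) \<Rightarrow> nat
     \<Rightarrow> (nat \<Rightarrow> nat \<Rightarrow> 'a) \<Rightarrow> bool" where
  "completely_positive add mul n A \<longleftrightarrow>
     (\<exists>k B. is_BBT add mul n k B A \<and> (\<forall>i<n. \<forall>l<k. \<exists>c. B i l = mul c c))"

definition cp_rank :: "('a \<Rightarrow> 'a \<Rightarrow> 'a) \<Rightarrow> ('a \<Rightarrow> 'a \<Rightarrow> 'a) \<Rightarrow> nat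
     \<Rightarrow> (nat \<Rightarrow> nat \<Rightarrow> 'a) \<Rightarrow> nat" where
  "cp_rank add mul n A = (LEAST k. \<exists>B. is_BBT add mul n k B A)"

end

theory Submission
  imports Defs
begin

locale ninc =
  fixes add mul :: "'a \<Rightarrow> 'a \<Rightarrow> 'a"
  assumes N: "normal_incline add mul" and T: "totally_ordered add"
begin

lemma I: "incline add mul" using N unfolding normal_incline_def by simp

abbreviation le where "le x y \<equiv> incline_le add x y"

lemma aA: "add (add x y) z = add x (add y z)" using I unfolding incline_def by blast
lemma aC: "add x y = add y x" using I unfolding incline_def by blast
lemma aI: "add x x = x" using I unfolding incline_def by blast
lemma mA: "mul (mul x y) z = mul x (mul y z)" using I unfolding incline_def by blast
lemma dist: "mul x (add y z) = add (mul x y) (mul x z)" using I unfolding incline_def by blast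
lemma absb: "add x (mul x y) = x" using I unfolding incline_def by blast
lemma mC: "mul x y = mul y x" using N unfolding normal_incline_def by simp

lemma izero: "add (izero add) x = x"
proof -
  have "\<exists>z. \<forall>x. add z x = x" using N unfolding normal_incline_def by simp
  then obtain z where z: "\<forall>x. add z x = x" by blast
  have "izero add = z" unfolding izero_def
  proof (rule the_equality)
    show "\<forall>x. add z x = x" by fact
    fix z' assume h: "\<forall>x. add z' x = x"
    have "z' = add z z'" using z by simp
    also have "\<dots> = add z' z" by (rule aC)
    also have "\<dots> = z" using h by simp
    finally show "z' = z" .
  qed
  thus ?thesis using z by simp
qed

lemma le_refl: "le x x" unfolding incline_le_def by (rule aI)
lemma le_antisym: "le x y \<Longrightarrow> le y x \<Longrightarrow> x = y" unfolding incline_le_def by (metis aC)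
lemma le_trans: "le x y \<Longrightarrow> le y z \<Longrightarrow> le x z" unfolding incline_le_def by (metis aA)
lemma le_total: "le x y \<or> le y x" using T unfolding totally_ordered_def by simp
lemma add_lub: "le x M \<Longrightarrow> le y M \<Longrightarrow> le (add x y) M" unfolding incline_le_def by (metis aA)
lemma mul_mono: "le x y \<Longrightarrow> le (mul w x) (mul w y)" unfolding incline_le_def by (metis dist)
lemma mul_le: "le (mul x y) x" unfolding incline_le_def by (metis aC absb)
lemma mul_mono2: "le x x' \<Longrightarrow> le y y' \<Longrightarrow> le (mul x y) (mul x' y')"
  by (metis le_trans mul_mono mC)
lemma add_is: "add x y = x \<or> add x y = y" using le_total unfolding incline_le_def by (metis aC)

lemma sq_rev: assumes "le (mul x x) (mul y y)" shows "le x y"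
proof (rule ccontr)
  assume "\<not> le x y"
  hence "le y x" using le_total by blast
  hence "le (mul y y) (mul x x)" using mul_mono2 by blast
  hence e: "mul y y = mul x x" using assms le_antisym by blast
  have "\<exists>!c. mul c c = mul x x" using N unfolding normal_incline_def by simp
  hence "x = y" using e by blast
  thus False using \<open>\<not> le x y\<close> le_refl by blast
qed

lemma divi: assumes "le y x" shows "\<exists>z. y = mul x z"
proof -
  have "\<exists>e. \<forall>x. mul e x = x" using N unfolding normal_incline_def by simp
  then obtain e where e: "\<forall>x. mul e x = x" by blast
  have li: "lattice_ideal add (gen_r_ideal add mul x)" using N unfolding normal_incline_def by simp
  let ?P = "{w. \<exists>z. w = mul x z}"
  have P: "r_ideal add mul ?P" unfolding r_ideal_def
  proof (intro conjI ballI allI)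
    show "?P \<noteq> {}" by blast
  next
    fix u v assume "u \<in> ?P" "v \<in> ?P"
    then obtain a b where "u = mul x a" "v = mul x b" by blast
    hence "add u v = mul x (add a b)" by (simp add: dist)
    thus "add u v \<in> ?P" by blast
  next
    fix u y assume "u \<in> ?P"
    then obtain a where a: "u = mul x a" by blast
    have "mul u y = mul x (mul a y)" using a by (simp add: mA)
    thus "mul u y \<in> ?P" by blast
    have "mul y u = mul u y" by (rule mC)
    hence "mul y u = mul x (mul a y)" using \<open>mul u y = mul x (mul a y)\<close> by simp
    thus "mul y u \<in> ?P" by blast
  qed
  have "mul x e = mul e x" by (rule mC)
  hence "mul x e = x" using e by simp
  hence xP: "x \<in> ?P" by (metis (mono_tags, lifting) mem_Collect_eq)
  have "x \<in> gen_r_ideal add mul x" unfolding gen_r_ideal_def by blast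
  hence "y \<in> gen_r_ideal add mul x" using li assms unfolding lattice_ideal_def by blast
  moreover have "gen_r_ideal add mul x \<subseteq> ?P" unfolding gen_r_ideal_def using P xP by blast
  ultimately have "y \<in> ?P" by blast
  thus ?thesis by blast
qed

lemma lemL: assumes "le c (mul p q)" shows "\<exists>y. le y q \<and> mul p y = c"
proof -
  have "le c p" using assms mul_le le_trans by blast
  then obtain z where z: "c = mul p z" using divi by blast
  show ?thesis
  proof (cases "le z q")
    case True thus ?thesis using z by blast
  next
    case False
    hence "le q z" using le_total by blast
    hence "le (mul p q) c" using z mul_mono by simp
    hence "mul p q = c" using assms le_antisym by blast
    thus ?thesis using le_refl by blast
  qed
qed

lemma foldr_lem: "foldr (\<lambda>l acc. add (f l) acc) xs b = add (foldr (\<lambda>l acc. add (f l) acc) xs (izero add)) b"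
  by (induction xs) (simp_all add: izero aA)

lemma isum_Suc: "isum add f (Suc k) = add (isum add f k) (f k)"
proof -
  have z: "add (f k) (izero add) = f k" using izero aC by metis
  have "isum add f (Suc k) = foldr (\<lambda>l acc. add (f l) acc) [0..<k] (add (f k) (izero add))"
    unfolding isum_def by simp
  also have "\<dots> = foldr (\<lambda>l acc. add (f l) acc) [0..<k] (f k)" using z by simp
  also have "\<dots> = add (isum add f k) (f k)" unfolding isum_def by (rule foldr_lem)
  finally show ?thesis .
qed

lemma isum_0: "isum add f 0 = izero add" unfolding isum_def by simp

lemma isum_ge: "l < k \<Longrightarrow> le (f l) (isum add f k)"
proof (induction k)
  case 0 thus ?case by simp
next
  case (Suc k)
  show ?case
  proof (cases "l = k")
    case True thus ?thesis unfolding isum_Suc incline_le_def by (metis aA aC aI)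
  next
    case False
    hence "le (f l) (isum add f k)" using Suc by simp
    thus ?thesis unfolding isum_Suc incline_le_def by (metis aA)
  qed
qed

lemma isum_le: "(\<forall>l<k. le (f l) M) \<Longrightarrow> le (isum add f k) M"
proof (induction k)
  case 0 thus ?case by (simp add: isum_0 incline_le_def izero)
next
  case (Suc k) thus ?case by (simp add: isum_Suc add_lub)
qed

lemma isum_attain: "0 < k \<Longrightarrow> \<exists>l<k. isum add f k = f l"
proof (induction k)
  case 0 thus ?case by simp
next
  case (Suc k)
  show ?case
  proof (cases "k = 0")
    case True thus ?thesis by (simp add: isum_Suc isum_0 izero)
  next
    case False
    then obtain l where "l < k" "isum add f k = f l" using Suc by auto
    thus ?thesis unfolding isum_Suc using add_is
      by (metis less_Suc_eq lessI)
  qed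
qed

lemma main:
  assumes BBT: "is_BBT add mul n k B A" and k: "0 < k" and n: "n = 2 \<or> n = 3"
  shows "\<exists>C. is_BBT add mul n n C A"
proof -
  have Aeq: "\<And>i j. i<n \<Longrightarrow> j<n \<Longrightarrow> A i j = isum add (\<lambda>l. mul (B i l) (B j l)) k"
    using BBT unfolding is_BBT_def by blast
  have sym: "\<And>i j. i<n \<Longrightarrow> j<n \<Longrightarrow> A i j = A j i"
  proof -
    fix i j assume "i<n" "j<n"
    have "(\<lambda>l. mul (B i l) (B j l)) = (\<lambda>l. mul (B j l) (B i l))" by (rule ext, rule mC)
    thus "A i j = A j i" using Aeq \<open>i<n\<close> \<open>j<n\<close> by simp
  qed
  have trm: "\<And>i j l. i<n \<Longrightarrow> j<n \<Longrightarrow> l<k \<Longrightarrow> le (mul (B i l) (B j l)) (A i j)"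
    using Aeq isum_ge by simp
  have ex: "\<And>i j. i<n \<Longrightarrow> j<n \<Longrightarrow> \<exists>l. l<k \<and> A i j = mul (B i l) (B j l)"
    using Aeq isum_attain k by metis
  define lsel where "lsel i j = (SOME l. l<k \<and> A i j = mul (B i l) (B j l))" for i j
  have lsel: "\<And>i j. i<n \<Longrightarrow> j<n \<Longrightarrow> lsel i j < k \<and> A i j = mul (B i (lsel i j)) (B j (lsel i j))"
    unfolding lsel_def by (rule someI_ex) (rule ex)
  define s where "s i = (THE c. mul c c = A i i)" for i
  have s: "\<And>i. mul (s i) (s i) = A i i"
  proof -
    fix i
    have "\<exists>!c. mul c c = A i i" using N unfolding normal_incline_def by simp
    thus "mul (s i) (s i) = A i i" unfolding s_def by (rule theI')
  qed
  have Bles: "\<And>i l. i<n \<Longrightarrow> l<k \<Longrightarrow> le (B i l) (s i)"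
    using trm s sq_rev by metis
  define nxt where "nxt m = (if Suc m < n then Suc m else 0)" for m
  have nxt: "\<And>m. nxt m < n" unfolding nxt_def using n by auto
  define C where "C j m = (if j = m then s m else
     (SOME y. le y (B j (lsel m (nxt m))) \<and> mul (s m) y = mul (B m (lsel m (nxt m))) (B j (lsel m (nxt m)))))" for j m
  have Cm: "\<And>m. C m m = s m" unfolding C_def by simp
  have v: "\<And>m j. m<n \<Longrightarrow> j<n \<Longrightarrow> j \<noteq> m \<Longrightarrow>
     le (C j m) (B j (lsel m (nxt m))) \<and> mul (s m) (C j m) = mul (B m (lsel m (nxt m))) (B j (lsel m (nxt m)))"
  proof -
    fix m j assume mj: "m<n" "j<n" "j \<noteq> m"
    let ?L = "lsel m (nxt m)"
    have L: "?L < k" using lsel nxt mj by blast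
    have "le (mul (B m ?L) (B j ?L)) (mul (s m) (B j ?L))"
      using mul_mono2 Bles[OF mj(1) L] le_refl by blast
    hence ex: "\<exists>y. le y (B j ?L) \<and> mul (s m) y = mul (B m ?L) (B j ?L)" by (rule lemL)
    have "C j m = (SOME y. le y (B j ?L) \<and> mul (s m) y = mul (B m ?L) (B j ?L))"
      unfolding C_def using mj(3) by simp
    thus "le (C j m) (B j ?L) \<and> mul (s m) (C j m) = mul (B m ?L) (B j ?L)"
      using someI_ex[OF ex] by simp
  qed
  have up: "\<And>i j m. i<n \<Longrightarrow> j<n \<Longrightarrow> m<n \<Longrightarrow> le (mul (C i m) (C j m)) (A i j)"
  proof -
    fix i j m assume ijm: "i<n" "j<n" "m<n"
    let ?L = "lsel m (nxt m)"
    have L: "?L < k" using lsel nxt ijm by blast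
    show "le (mul (C i m) (C j m)) (A i j)"
    proof (cases "i = m")
      case True
      show ?thesis
      proof (cases "j = m")
        case True thus ?thesis using \<open>i = m\<close> Cm s le_refl by simp
      next
        case False
        thus ?thesis using v[OF ijm(3) ijm(2) False] trm[OF ijm(1) ijm(2) L] True Cm by simp
      qed
    next
      case False
      show ?thesis
      proof (cases "j = m")
        case True
        have "mul (C i m) (C j m) = mul (s m) (C i m)" using True Cm mC by simp
        also have "\<dots> = mul (B i ?L) (B m ?L)" using v[OF ijm(3) ijm(1) False] mC by simp
        finally show ?thesis using trm[OF ijm(1) ijm(3) L] True by simp
      next
        case False2: False
        have "le (mul (C i m) (C j m)) (mul (B i ?L) (B j ?L))"
          using mul_mono2 v[OF ijm(3) ijm(1) False] v[OF ijm(3) ijm(2) False2] by blast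
        thus ?thesis using trm[OF ijm(1) ijm(2) L] le_trans by blast
      qed
    qed
  qed
  have att: "\<And>i j. i<n \<Longrightarrow> j<n \<Longrightarrow> \<exists>m<n. mul (C i m) (C j m) = A i j"
  proof -
    fix i j assume ij: "i<n" "j<n"
    show "\<exists>m<n. mul (C i m) (C j m) = A i j"
    proof (cases "i = j")
      case True thus ?thesis using ij Cm s by metis
    next
      case False
      have "j = nxt i \<or> i = nxt j" unfolding nxt_def using n ij False by auto
      thus ?thesis
      proof
        assume j: "j = nxt i"
        have "mul (C i i) (C j i) = mul (B i (lsel i j)) (B j (lsel i j))"
          using v[OF ij(1) ij(2)] False Cm j by simp
        also have "\<dots> = A i j" using lsel ij by simp
        finally show ?thesis using ij by blast
      next
        assume i: "i = nxt j"
        have "mul (C i j) (C j j) = mul (s j) (C i j)" using Cm mC by simp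
        also have "\<dots> = mul (B j (lsel j i)) (B i (lsel j i))"
          using v[OF ij(2) ij(1)] False i by simp
        also have "\<dots> = A j i" using lsel ij by simp
        also have "\<dots> = A i j" using sym ij by simp
        finally show ?thesis using ij by blast
      qed
    qed
  qed
  have "is_BBT add mul n n C A" unfolding is_BBT_def
  proof (intro allI impI)
    fix i j assume ij: "i<n" "j<n"
    have a: "le (isum add (\<lambda>m. mul (C i m) (C j m)) n) (A i j)"
      using isum_le up ij by simp
    obtain m where m: "m<n" "mul (C i m) (C j m) = A i j" using att ij by blast
    have "le (A i j) (isum add (\<lambda>m. mul (C i m) (C j m)) n)"
      using isum_ge[OF m(1), of "\<lambda>m. mul (C i m) (C j m)"] m(2) by simp
    thus "A i j = isum add (\<lambda>m. mul (C i m) (C j m)) n" using a le_antisym by blast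
  qed
  thus ?thesis by blast
qed

end

theorem mainTheorem5:
  fixes add mul :: "'a \<Rightarrow> 'a \<Rightarrow> 'a" and A :: "nat \<Rightarrow> nat \<Rightarrow> 'a" and n :: nat
  assumes "normal_incline add mul"
    and "totally_ordered add"
    and "n = 2 \<or> n = 3"
    and "completely_positive add mul n A"
  shows "cp_rank add mul n A \<le> n"
proof -
  interpret ninc add mul using assms(1,2) by unfold_locales
  obtain k B where BBT: "is_BBT add mul n k B A"
    using assms(4) unfolding completely_positive_def by blast
  have r: "\<And>k'. (\<exists>B. is_BBT add mul n k' B A) \<Longrightarrow> cp_rank add mul n A \<le> k'"
    unfolding cp_rank_def by (rule Least_le)
  show ?thesis
  proof (cases "k \<le> n")
    case True thus ?thesis using r BBT by force
  next
    case False
    hence "0 < k" by simp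
    then obtain C where "is_BBT add mul n n C A" using main[OF BBT _ assms(3)] by blast
    thus ?thesis using r by blast
  qed
qed

end
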